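(* Let $k$ be a positive integer, let $D$ be a digraph containing no subdivision of $B(k,1;k)$, let $\mathcal{C}$ be a $k$-suitable collection of directed cycles of $D$, and let $C_1\in\mathcal{C}$. Then the digraph $I^+(C_1)$ contains no directed cycle.
   Context: A collection $\mathcal{C}$ of directed cycles is $k$-suitable if every cycle of $\mathcal{C}$ has length at least $8k$ and for any two distinct $C_i,C_j\in\mathcal{C}$, the set $V(C_i)\cap V(C_j)$ is either empty or the vertex set of a directed path $P_{i,j}$ with at most $k$ vertices which is a subpath of both $C_i$ and $C_j$; $s_{i,j}$, $t_{i,j}$ denote the initial and terminal vertices of $P_{i,j}$. For a directed cycle $C$ and vertices $a,b$ on it, $C[a,b]$ is the directed subpath of $C$ from $a$ to $b$, and $C]a,b]$ denotes it with $a$ removed. $\mathcal{C}\cap C_1$ denotes the set of cycles of $\mathcal{C}$ other than $C_1$ sharing a vertex with $C_1$. For $C_j\in\mathcal{C}\cap C_1$, let $t(Q_j)$ be the vertex of $C_j$ with $C_j[t_{1,j},t(Q_j)]$ of length $3k$, and $Q^+_j=C_j]t_{1,j},t(Q_j)]$. $I^+(C_1)=\bigcup_{C_j\in\mathcal{C}\cap C_1}Q^+_j$ (union of digraphs). A digraph contains a subdivision of $B(k_1,k_2;k_3)$ if there exist distinct vertices $u,w$ and three pairwise internally vertex-disjoint directed paths: two from $u$ to $w$ of lengths at least $k_1$ and $k_2$, and one from $w$ to $u$ of length at least $k_3$. *)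

theory Defs
  imports Main
begin

text \<open>A digraph is a pair (V, E) with a vertex set V and arc set E \<subseteq> V \<times> V.
  A directed cycle is represented by its arc set.\<close>

definition digraph :: "'a set \<Rightarrow> ('a \<times> 'a) set \<Rightarrow> bool" where
  "digraph V E \<longleftrightarrow> finite V \<and> E \<subseteq> V \<times> V"

definition verts :: "('a \<times> 'a) set \<Rightarrow> 'a set" where
  "verts A = Domain A \<union> Range A"

definition is_dicycle :: "('a \<times> 'a) set \<Rightarrow> bool" where
  "is_dicycle A \<longleftrightarrow> (\<exists>vs. 2 \<le> length vs \<and> distinct vs \<and>
     A = {(vs ! i, vs ! (Suc i mod length vs)) | i. i < length vs})"

definition cyc_len :: "('a \<times> 'a) set \<Rightarrow> nat" where
  "cyc_len A = card A"

definition is_dipath :: "('a \<times> 'a) set \<Rightarrow> 'a list \<Rightarrow> bool" where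
  "is_dipath E ps \<longleftrightarrow> ps \<noteq> [] \<and> distinct ps \<and>
     (\<forall>i. Suc i < length ps \<longrightarrow> (ps ! i, ps ! Suc i) \<in> E)"

definition has_B_subdivision :: "'a set \<Rightarrow> ('a \<times> 'a) set \<Rightarrow> nat \<Rightarrow> nat \<Rightarrow> nat \<Rightarrow> bool" where
  "has_B_subdivision V E k1 k2 k3 \<longleftrightarrow>
     (\<exists>u w P1 P2 P3. u \<in> V \<and> w \<in> V \<and> u \<noteq> w \<and>
        is_dipath E P1 \<and> is_dipath E P2 \<and> is_dipath E P3 \<and> P1 \<noteq> P2 \<and>
        hd P1 = u \<and> last P1 = w \<and> hd P2 = u \<and> last P2 = w \<and>
        hd P3 = w \<and> last P3 = u \<and>
        length P1 - 1 \<ge> k1 \<and> length P2 - 1 \<ge> k2 \<and> length P3 - 1 \<ge> k3 \<and>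
        set P1 \<inter> set P2 = {u, w} \<and> set P1 \<inter> set P3 = {u, w} \<and> set P2 \<inter> set P3 = {u, w})"

definition k_suitable :: "('a \<times> 'a) set \<Rightarrow> nat \<Rightarrow> ('a \<times> 'a) set set \<Rightarrow> bool" where
  "k_suitable E k \<C> \<longleftrightarrow>
     (\<forall>C\<in>\<C>. is_dicycle C \<and> C \<subseteq> E \<and> cyc_len C \<ge> 8 * k) \<and>
     (\<forall>Ci\<in>\<C>. \<forall>Cj\<in>\<C>. Ci \<noteq> Cj \<longrightarrow>
        verts Ci \<inter> verts Cj = {} \<or>
        (\<exists>ps. is_dipath Ci ps \<and> is_dipath Cj ps \<and> set ps = verts Ci \<inter> verts Cj \<and> length ps \<le> k))"

definition cyc_succ :: "('a \<times> 'a) set \<Rightarrow> 'a \<Rightarrow> 'a" where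
  "cyc_succ A v = (THE w. (v, w) \<in> A)"

definition common_path :: "('a \<times> 'a) set \<Rightarrow> ('a \<times> 'a) set \<Rightarrow> 'a list" where
  "common_path Ci Cj = (THE ps. is_dipath Ci ps \<and> is_dipath Cj ps \<and> set ps = verts Ci \<inter> verts Cj)"

definition t_vert :: "('a \<times> 'a) set \<Rightarrow> ('a \<times> 'a) set \<Rightarrow> 'a" where
  "t_vert Ci Cj = last (common_path Ci Cj)"

text \<open>Q^+_j = C_j]t_{1,j}, t(Q_j)] where C_j[t_{1,j}, t(Q_j)] has length 3k,
  as a digraph (vertex set, arc set).\<close>
definition Qplus :: "nat \<Rightarrow> ('a \<times> 'a) set \<Rightarrow> ('a \<times> 'a) set \<Rightarrow> 'a set \<times> ('a \<times> 'a) set" where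
  "Qplus k C1 Cj =
     (let t = t_vert C1 Cj; s = cyc_succ Cj in
      ({(s ^^ i) t | i. 1 \<le> i \<and> i \<le> 3 * k},
       {((s ^^ i) t, (s ^^ Suc i) t) | i. 1 \<le> i \<and> i < 3 * k}))"

definition meeting :: "('a \<times> 'a) set set \<Rightarrow> ('a \<times> 'a) set \<Rightarrow> ('a \<times> 'a) set set" where
  "meeting \<C> C1 = {Cj \<in> \<C>. Cj \<noteq> C1 \<and> verts Cj \<inter> verts C1 \<noteq> {}}"

definition Iplus :: "nat \<Rightarrow> ('a \<times> 'a) set set \<Rightarrow> ('a \<times> 'a) set \<Rightarrow> 'a set \<times> ('a \<times> 'a) set" where
  "Iplus k \<C> C1 =
     ((\<Union>Cj\<in>meeting \<C> C1. fst (Qplus k C1 Cj)), (\<Union>Cj\<in>meeting \<C> C1. snd (Qplus k C1 Cj)))"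

definition has_dicycle :: "'a set \<times> ('a \<times> 'a) set \<Rightarrow> bool" where
  "has_dicycle G \<longleftrightarrow> (\<exists>A. A \<subseteq> snd G \<and> is_dicycle A)"

end

theory Submission
  imports Defs
begin

locale dcyc = fixes C :: "('a \<times> 'a) set" assumes dc: "is_dicycle C"
begin

definition vl where "vl = (SOME vs. 2 \<le> length vs \<and> distinct vs \<and>
     C = {(vs ! i, vs ! (Suc i mod length vs)) | i. i < length vs})"

lemma vl: "2 \<le> length vl" "distinct vl" "C = {(vl ! i, vl ! (Suc i mod length vl)) | i. i < length vl}"
proof -
  have "\<exists>vs. 2 \<le> length vs \<and> distinct vs \<and>
     C = {(vs ! i, vs ! (Suc i mod length vs)) | i. i < length vs}" using dc unfolding is_dicycle_def by blast
  from someI_ex[OF this] show "2 \<le> length vl" "distinct vl" "C = {(vl ! i, vl ! (Suc i mod length vl)) | i. i < length vl}"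
    unfolding vl_def by auto
qed

abbreviation "s \<equiv> cyc_succ C"
abbreviation "n \<equiv> length vl"

lemma n_pos: "0 < n" using vl(1) by linarith

lemma mem_C: "(a, b) \<in> C \<longleftrightarrow> (\<exists>i<n. a = vl ! i \<and> b = vl ! (Suc i mod n))"
proof -
  have "(a, b) \<in> C \<longleftrightarrow> (a, b) \<in> {(vl ! i, vl ! (Suc i mod length vl)) | i. i < length vl}"
    by (rule eqset_imp_iff[OF vl(3)])
  then show ?thesis by blast
qed

lemma card_eq: "card C = n"
proof -
  have "C = (\<lambda>i. (vl ! i, vl ! (Suc i mod n))) ` {..<n}" using mem_C by auto
  moreover have "inj_on (\<lambda>i. (vl ! i, vl ! (Suc i mod n))) {..<n}"
    using vl(2) by (auto simp: inj_on_def nth_eq_iff_index_eq)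
  ultimately show ?thesis by (metis card_image card_lessThan)
qed

lemma verts_eq: "verts C = set vl"
proof
  show "verts C \<subseteq> set vl" using n_pos unfolding verts_def by (auto simp: mem_C)
  show "set vl \<subseteq> verts C"
  proof
    fix x assume "x \<in> set vl"
    then obtain i where "i < n" "x = vl ! i" by (auto simp: in_set_conv_nth)
    then have "(vl ! i, vl ! (Suc i mod n)) \<in> C" using mem_C by auto
    then show "x \<in> verts C" unfolding verts_def using \<open>x = vl ! i\<close> by force
  qed
qed

lemma succ_nth: assumes "i < n" shows "s (vl ! i) = vl ! (Suc i mod n)"
  unfolding cyc_succ_def
proof (rule the_equality)
  show "(vl ! i, vl ! (Suc i mod n)) \<in> C" using mem_C assms by auto
  fix w assume "(vl ! i, w) \<in> C"
  then obtain i' where "i' < n" "vl ! i = vl ! i'" "w = vl ! (Suc i' mod n)" using mem_C by blast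
  then show "w = vl ! (Suc i mod n)" using vl(2) assms by (simp add: nth_eq_iff_index_eq)
qed

lemma iter_nth: assumes "i < n" shows "(s ^^ m) (vl ! i) = vl ! ((i + m) mod n)"
proof (induction m)
  case 0 then show ?case using assms by simp
next
  case (Suc m)
  have "(s ^^ Suc m) (vl ! i) = s (vl ! ((i + m) mod n))" using Suc by simp
  also have "\<dots> = vl ! (Suc ((i + m) mod n) mod n)" using n_pos by (intro succ_nth mod_less_divisor)
  also have "Suc ((i + m) mod n) mod n = (i + Suc m) mod n" by (simp add: mod_Suc_eq)
  finally show ?case .
qed

lemma V_nth: assumes "x \<in> verts C" obtains i where "i < n" "x = vl ! i"
  using assms by (auto simp: verts_eq in_set_conv_nth)

lemma iter_V: assumes "x \<in> verts C" shows "(s ^^ m) x \<in> verts C"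
proof -
  obtain i where "i < n" "x = vl ! i" using V_nth assms by blast
  then show ?thesis using iter_nth n_pos by (simp add: verts_eq)
qed

lemma succ_V: assumes "x \<in> verts C" shows "s x \<in> verts C"
  using iter_V[OF assms, of 1] by simp

lemma arc: assumes "x \<in> verts C" shows "(x, s x) \<in> C"
proof -
  obtain i where "i < n" "x = vl ! i" using V_nth assms by blast
  then show ?thesis using succ_nth mem_C by auto
qed

lemma arc_succ: assumes "(x, y) \<in> C" shows "y = s x" "x \<in> verts C"
proof -
  obtain i where "i < n" "x = vl ! i" "y = vl ! (Suc i mod n)" using mem_C assms by blast
  then show "y = s x" using succ_nth by simp
  show "x \<in> verts C" using assms unfolding verts_def by auto
qed

lemma full: assumes "x \<in> verts C" shows "(s ^^ n) x = x"
proof -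
  obtain i where "i < n" "x = vl ! i" using V_nth assms by blast
  then show ?thesis using iter_nth by simp
qed

lemma nofix: assumes "x \<in> verts C" "0 < m" "m < n" shows "(s ^^ m) x \<noteq> x"
proof
  assume h: "(s ^^ m) x = x"
  obtain i where i: "i < n" "x = vl ! i" using V_nth assms by blast
  then have "vl ! ((i + m) mod n) = vl ! i" using h iter_nth by simp
  then have e: "(i + m) mod n = i" using vl(2) i n_pos by (simp add: nth_eq_iff_index_eq)
  show False
  proof (cases "i + m < n")
    case True then show ?thesis using e assms by simp
  next
    case False
    then have "(i + m) mod n = i + m - n" using le_mod_geq[of n "i+m"] i assms by simp
    then show ?thesis using e assms i False by linarith
  qed
qed

lemma reach: assumes "x \<in> verts C" "y \<in> verts C" shows "\<exists>m<n. (s ^^ m) x = y"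
proof -
  obtain i where i: "i < n" "x = vl ! i" using V_nth assms by blast
  obtain j where j: "j < n" "y = vl ! j" using V_nth assms by blast
  show ?thesis
  proof (cases "i \<le> j")
    case True
    then show ?thesis using i j iter_nth by (intro exI[of _ "j - i"]) auto
  next
    case False
    have "i + (n + j - i) = j + n" using i by simp
    then have "(i + (n + j - i)) mod n = j" using j by simp
    then show ?thesis using i j iter_nth False by (intro exI[of _ "n + j - i"]) auto
  qed
qed

lemma succ_inj: assumes "x \<in> verts C" "y \<in> verts C" "s x = s y" shows "x = y"
proof -
  obtain i where i: "i < n" "x = vl ! i" using V_nth assms by blast
  obtain j where j: "j < n" "y = vl ! j" using V_nth assms by blast
  have "vl ! (Suc i mod n) = vl ! (Suc j mod n)" using assms i j succ_nth by simp
  then have "Suc i mod n = Suc j mod n" using vl(1,2) n_pos by (simp add: nth_eq_iff_index_eq)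
  then have "i = j" using i j by (auto simp: mod_Suc split: if_splits)
  then show ?thesis using i j by simp
qed

lemma iter_inj: assumes "x \<in> verts C" "y \<in> verts C" "(s ^^ m) x = (s ^^ m) y" shows "x = y"
  using assms(3)
proof (induction m)
  case 0 then show ?case by simp
next
  case (Suc m)
  then show ?case using succ_inj[OF iter_V[OF assms(1)] iter_V[OF assms(2)]] by simp
qed

lemma KK: assumes "x \<in> verts C" "(s ^^ i) x = (s ^^ j) x" "i \<le> j" "j < i + 2 * n"
  shows "j = i \<or> j = i + n"
proof -
  define y where "y = (s ^^ i) x"
  have y: "y \<in> verts C" using iter_V assms y_def by simp
  have "(s ^^ j) x = (s ^^ (j - i)) y" unfolding y_def
    using assms(3) by (metis funpow_add le_add_diff_inverse2 o_apply)
  then have h: "(s ^^ (j - i)) y = y" using assms y_def by simp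
  consider "j - i = 0" | "0 < j - i" "j - i < n" | "j - i = n" | "n < j - i" by linarith
  then show ?thesis
  proof cases
    case 2 then show ?thesis using nofix[OF y] h by blast
  next
    case 4
    have "(s ^^ (j - i)) y = (s ^^ (j - i - n)) ((s ^^ n) y)"
      using 4 by (metis funpow_add le_add_diff_inverse2 less_imp_le_nat o_apply)
    then have "(s ^^ (j - i - n)) y = y" using h full[OF y] by simp
    then show ?thesis using nofix[OF y, of "j - i - n"] 4 assms by linarith
  qed (use assms in auto)
qed

lemma dipath_nth: assumes "is_dipath C P" "i < length P" shows "P ! i = (s ^^ i) (hd P)"
  using assms(2)
proof (induction i)
  case 0 then show ?case using assms(1) by (simp add: is_dipath_def hd_conv_nth)
next
  case (Suc i)
  have "(P ! i, P ! Suc i) \<in> C" using assms(1) Suc by (auto simp: is_dipath_def)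
  then show ?case using Suc arc_succ(1) by simp
qed

lemma dipath_last: assumes "is_dipath C P" "x \<in> set P"
  shows "\<exists>f<length P. (s ^^ f) x = last P \<and> (\<forall>g\<le>f. (s ^^ g) x \<in> set P)"
proof -
  obtain r where r: "r < length P" "x = P ! r" using assms(2) by (auto simp: in_set_conv_nth)
  have P: "P \<noteq> []" using assms(1) by (simp add: is_dipath_def)
  have a: "(s ^^ g) x = P ! (r + g)" if "r + g < length P" for g
  proof -
    have "(s ^^ g) x = (s ^^ g) ((s ^^ r) (hd P))" using r dipath_nth[OF assms(1)] by simp
    also have "\<dots> = (s ^^ (g + r)) (hd P)" by (simp add: funpow_add)
    also have "\<dots> = P ! (r + g)" using dipath_nth[OF assms(1) that] by (simp add: add.commute)
    finally show ?thesis .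
  qed
  show ?thesis
  proof (intro exI[of _ "length P - 1 - r"] conjI allI impI)
    show "length P - 1 - r < length P" using r by simp
    show "(s ^^ (length P - 1 - r)) x = last P" using a[of "length P - 1 - r"] r P
      by (simp add: last_conv_nth)
    fix g assume "g \<le> length P - 1 - r"
    then show "(s ^^ g) x \<in> set P" using a[of g] r by simp
  qed
qed

lemma dipath_unique: assumes "is_dipath C ps" "is_dipath C qs" "set ps = set qs" "set ps \<subseteq> verts C"
  "2 * length ps < n" shows "ps = qs"
proof -
  have d: "distinct ps" "distinct qs" "ps \<noteq> []" "qs \<noteq> []" using assms by (auto simp: is_dipath_def)
  have len: "length ps = length qs" using d assms(3) by (metis distinct_card)
  have "hd qs \<in> set ps" using d assms(3) by (metis hd_in_set)
  then obtain b where b: "b < length ps" "hd qs = (s ^^ b) (hd ps)"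
    using dipath_nth[OF assms(1)] by (metis in_set_conv_nth)
  have "hd ps \<in> set qs" using d assms(3) by (metis hd_in_set)
  then obtain c where c: "c < length qs" "hd ps = (s ^^ c) (hd qs)"
    using dipath_nth[OF assms(2)] by (metis in_set_conv_nth)
  have hv: "hd ps \<in> verts C" using assms(4) d by auto
  have "(s ^^ (c + b)) (hd ps) = (s ^^ 0) (hd ps)" using b c by (simp add: funpow_add)
  from KK[OF hv this[symmetric]] have "c + b = 0 \<or> c + b = n" using b c len assms(5) by linarith
  then have "b = 0" using b c len assms(5) by linarith
  then have hh: "hd qs = hd ps" using b by simp
  show ?thesis
  proof (rule nth_equalityI)
    show "length ps = length qs" by (rule len)
    fix i assume "i < length ps"
    then show "ps ! i = qs ! i" using dipath_nth[OF assms(1)] dipath_nth[OF assms(2)] hh len by simp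
  qed
qed

end

definition seg :: "('a \<times> 'a) set \<Rightarrow> 'a \<Rightarrow> nat \<Rightarrow> 'a list" where
  "seg C x m = map (\<lambda>i. (cyc_succ C ^^ i) x) [0..<Suc m]"

lemma (in dcyc) seg_dipath: assumes "x \<in> verts C" "m < n" shows "is_dipath C (seg C x m)"
  unfolding is_dipath_def seg_def
proof (intro conjI allI impI)
  show "map (\<lambda>i. (s ^^ i) x) [0..<Suc m] \<noteq> []" by simp
  show "distinct (map (\<lambda>i. (s ^^ i) x) [0..<Suc m])"
    unfolding distinct_map
  proof
    show "inj_on (\<lambda>i. (s ^^ i) x) (set [0..<Suc m])"
    proof (rule inj_onI)
      fix i j assume h: "i \<in> set [0..<Suc m]" "j \<in> set [0..<Suc m]" "(s ^^ i) x = (s ^^ j) x"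
      show "i = j"
      proof (cases "i \<le> j")
        case True then show ?thesis using KK[OF assms(1) h(3)] h assms by auto
      next
        case False then show ?thesis using KK[OF assms(1) h(3)[symmetric]] h assms by auto
      qed
    qed
  qed simp
  fix i assume "Suc i < length (map (\<lambda>i. (s ^^ i) x) [0..<Suc m])"
  then show "(map (\<lambda>i. (s ^^ i) x) [0..<Suc m] ! i, map (\<lambda>i. (s ^^ i) x) [0..<Suc m] ! Suc i) \<in> C"
    using arc[OF iter_V[OF assms(1), of i]] by (simp del: upt_Suc)
qed

lemma seg_simps: "hd (seg C x m) = x" "last (seg C x m) = (cyc_succ C ^^ m) x"
  "set (seg C x m) = {(cyc_succ C ^^ i) x | i. i \<le> m}" "length (seg C x m) = Suc m"
  unfolding seg_def by (auto simp: hd_map last_map simp del: upt_Suc)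



context dcyc begin
lemma KKc: "x \<in> verts C \<Longrightarrow> (s ^^ i) x = (s ^^ j) x \<Longrightarrow> i \<le> j \<Longrightarrow> j < i + 2 * card C \<Longrightarrow> j = i \<or> j = i + card C"
  using KK card_eq by simp
lemma fullc: "x \<in> verts C \<Longrightarrow> (s ^^ card C) x = x" using full card_eq by simp
lemma nofixc: "x \<in> verts C \<Longrightarrow> 0 < m \<Longrightarrow> m < card C \<Longrightarrow> (s ^^ m) x \<noteq> x" using nofix card_eq by simp
lemma reachc: "x \<in> verts C \<Longrightarrow> y \<in> verts C \<Longrightarrow> \<exists>m<card C. (s ^^ m) x = y" using reach card_eq by simp
lemma seg_dipathc: "x \<in> verts C \<Longrightarrow> m < card C \<Longrightarrow> is_dipath C (seg C x m)" using seg_dipath card_eq by simp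
lemma dipath_uniquec: "is_dipath C ps \<Longrightarrow> is_dipath C qs \<Longrightarrow> set ps = set qs \<Longrightarrow> set ps \<subseteq> verts C \<Longrightarrow>
  2 * length ps < card C \<Longrightarrow> ps = qs" using dipath_unique card_eq by simp
end

lemma dipath_mono: "is_dipath C P \<Longrightarrow> C \<subseteq> E \<Longrightarrow> is_dipath E P"
  unfolding is_dipath_def by blast

lemma dipath_append:
  assumes "is_dipath E xs" "is_dipath E ys" "last xs = hd ys" "set xs \<inter> set ys = {hd ys}"
  shows "is_dipath E (xs @ tl ys)"
proof -
  obtain y zs where ys: "ys = y # zs" using assms(2) by (cases ys) (auto simp: is_dipath_def)
  have dx: "distinct xs" "xs \<noteq> []" using assms(1) by (auto simp: is_dipath_def)
  have dy: "distinct (y # zs)" using assms(2) ys by (auto simp: is_dipath_def)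
  have disj: "set xs \<inter> set zs = {}" using assms(4) dy ys by auto
  have lx: "xs ! (length xs - 1) = y" using assms(3) ys dx by (simp add: last_conv_nth)
  show ?thesis unfolding is_dipath_def
  proof (intro conjI allI impI)
    show "xs @ tl ys \<noteq> []" using dx by simp
    show "distinct (xs @ tl ys)" using dx dy disj ys by simp
    fix i assume i: "Suc i < length (xs @ tl ys)"
    consider "Suc i < length xs" | "Suc i = length xs" | "Suc i > length xs" by linarith
    then show "((xs @ tl ys) ! i, (xs @ tl ys) ! Suc i) \<in> E"
    proof cases
      case 1 then show ?thesis using assms(1) by (simp add: nth_append is_dipath_def)
    next
      case 2
      have "(ys ! 0, ys ! Suc 0) \<in> E" using assms(2) i 2 ys by (auto simp: is_dipath_def)
      moreover have "xs ! i = y" using lx 2 by (metis diff_Suc_1)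
      ultimately show ?thesis using 2 ys by (simp add: nth_append)
    next
      case 3
      have h: "\<forall>j. Suc j < length ys \<longrightarrow> (ys ! j, ys ! Suc j) \<in> E" using assms(2) by (simp add: is_dipath_def)
      have "Suc (Suc (i - length xs)) < length ys" using i 3 ys by simp
      then have "(ys ! Suc (i - length xs), ys ! Suc (Suc (i - length xs))) \<in> E" using h by blast
      then have "(zs ! (i - length xs), zs ! Suc (i - length xs)) \<in> E" using ys by simp
      moreover have "Suc i - length xs = Suc (i - length xs)" using 3 by simp
      ultimately show ?thesis using 3 ys by (simp add: nth_append)
    qed
  qed
qed

lemma tl_seg: "tl (seg C x m) = map (\<lambda>i. (cyc_succ C ^^ i) x) [1..<Suc m]"
  unfolding seg_def by (simp add: upt_conv_Cons del: upt_Suc)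

lemma set_tl_seg: "set (tl (seg C x m)) = {(cyc_succ C ^^ i) x | i. 1 \<le> i \<and> i \<le> m}"
  unfolding tl_seg by auto

lemma verts_sub: "C \<subseteq> E \<Longrightarrow> E \<subseteq> V \<times> V \<Longrightarrow> verts C \<subseteq> V"
  unfolding verts_def by auto



locale setting =
  fixes V :: "'a set" and E :: "('a \<times> 'a) set" and k :: nat
    and CC :: "('a \<times> 'a) set set" and C1 :: "('a \<times> 'a) set"
  assumes k1: "k \<ge> 1" and dg: "digraph V E" and suit: "k_suitable E k CC" and C1: "C1 \<in> CC"
begin

lemma cyc: assumes "C \<in> CC" shows "dcyc C" "C \<subseteq> E" "8 * k \<le> card C"
proof -
  have "is_dicycle C \<and> C \<subseteq> E \<and> cyc_len C \<ge> 8 * k" using suit assms unfolding k_suitable_def by blast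
  then show "dcyc C" "C \<subseteq> E" "8 * k \<le> card C" unfolding cyc_len_def dcyc_def by auto
qed

lemma vertsV: assumes "C \<in> CC" shows "verts C \<subseteq> V"
  using verts_sub cyc(2)[OF assms] dg unfolding digraph_def by blast

lemma suitD: assumes "Ci \<in> CC" "Cj \<in> CC" "Ci \<noteq> Cj" "verts Ci \<inter> verts Cj \<noteq> {}"
  shows "\<exists>ps. is_dipath Ci ps \<and> is_dipath Cj ps \<and> set ps = verts Ci \<inter> verts Cj \<and> length ps \<le> k"
proof -
  have "\<forall>Ci\<in>CC. \<forall>Cj\<in>CC. Ci \<noteq> Cj \<longrightarrow>
        verts Ci \<inter> verts Cj = {} \<or>
        (\<exists>ps. is_dipath Ci ps \<and> is_dipath Cj ps \<and> set ps = verts Ci \<inter> verts Cj \<and> length ps \<le> k)"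
    using suit unfolding k_suitable_def by (rule conjunct2)
  then have "verts Ci \<inter> verts Cj = {} \<or>
        (\<exists>ps. is_dipath Ci ps \<and> is_dipath Cj ps \<and> set ps = verts Ci \<inter> verts Cj \<and> length ps \<le> k)"
    using assms(1-3) by blast
  then show ?thesis using assms(4) by blast
qed

lemma pair: assumes "Cj \<in> CC" "Cl \<in> CC" "Cj \<noteq> Cl" "verts Cj \<inter> verts Cl \<noteq> {}"
  shows "\<exists>p0 m. m \<le> k \<and> (\<forall>z. z \<in> verts Cj \<inter> verts Cl \<longleftrightarrow> (\<exists>r<m. z = (cyc_succ Cj ^^ r) p0))
     \<and> (\<forall>r<m. (cyc_succ Cj ^^ r) p0 = (cyc_succ Cl ^^ r) p0)"
proof -
  obtain ps where ps: "is_dipath Cj ps" "is_dipath Cl ps" "set ps = verts Cj \<inter> verts Cl" "length ps \<le> k"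
    using suitD assms by blast
  interpret j: dcyc Cj using cyc assms by auto
  interpret l: dcyc Cl using cyc assms by auto
  show ?thesis
  proof (intro exI conjI allI)
    show "length ps \<le> k" by fact
    fix z
    have "z \<in> set ps \<longleftrightarrow> (\<exists>r<length ps. z = ps ! r)" by (auto simp: in_set_conv_nth)
    then show "z \<in> verts Cj \<inter> verts Cl \<longleftrightarrow> (\<exists>r<length ps. z = (cyc_succ Cj ^^ r) (hd ps))"
      using j.dipath_nth[OF ps(1)] ps(3) by auto
  next
    fix r show "r < length ps \<longrightarrow> (cyc_succ Cj ^^ r) (hd ps) = (cyc_succ Cl ^^ r) (hd ps)"
    proof
      assume "r < length ps"
      then show "(cyc_succ Cj ^^ r) (hd ps) = (cyc_succ Cl ^^ r) (hd ps)"
        using j.dipath_nth[OF ps(1), of r] l.dipath_nth[OF ps(2), of r] by simp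
    qed
  qed
qed

lemma meetD: assumes "Cj \<in> meeting CC C1" shows "Cj \<in> CC" "Cj \<noteq> C1" "verts C1 \<inter> verts Cj \<noteq> {}"
  using assms unfolding meeting_def by auto

lemma meet: assumes "Cj \<in> meeting CC C1"
  shows "t_vert C1 Cj \<in> verts C1 \<inter> verts Cj"
   "\<forall>x\<in>verts C1 \<inter> verts Cj. \<exists>f<k. (cyc_succ Cj ^^ f) x = t_vert C1 Cj \<and> (\<forall>g\<le>f. (cyc_succ Cj ^^ g) x \<in> verts C1 \<inter> verts Cj)"
   "\<forall>x\<in>verts C1 \<inter> verts Cj. \<exists>f<k. (cyc_succ C1 ^^ f) x = t_vert C1 Cj \<and> (\<forall>g\<le>f. (cyc_succ C1 ^^ g) x \<in> verts C1 \<inter> verts Cj)"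
proof -
  note m = meetD[OF assms]
  obtain ps where ps: "is_dipath C1 ps" "is_dipath Cj ps" "set ps = verts C1 \<inter> verts Cj" "length ps \<le> k"
    using suitD[OF C1 m(1)] m by blast
  interpret j: dcyc Cj using cyc m by auto
  interpret c: dcyc C1 using cyc C1 by auto
  have cp: "common_path C1 Cj = ps" unfolding common_path_def
  proof (rule the_equality)
    show "is_dipath C1 ps \<and> is_dipath Cj ps \<and> set ps = verts C1 \<inter> verts Cj" using ps by simp
    fix qs assume q: "is_dipath C1 qs \<and> is_dipath Cj qs \<and> set qs = verts C1 \<inter> verts Cj"
    have "2 * length ps < card C1" using ps(4) cyc(3)[OF C1] k1 by linarith
    moreover have "set ps = set qs" using q ps(3) by simp
    moreover have "set ps \<subseteq> verts C1" using ps(3) by blast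
    ultimately show "qs = ps" using c.dipath_uniquec[OF ps(1), of qs] q by simp
  qed
  have t: "t_vert C1 Cj = last ps" using cp unfolding t_vert_def by simp
  have ne: "ps \<noteq> []" using ps(1) by (simp add: is_dipath_def)
  show "t_vert C1 Cj \<in> verts C1 \<inter> verts Cj" using t last_in_set[OF ne] ps(3) by simp
  show "\<forall>x\<in>verts C1 \<inter> verts Cj. \<exists>f<k. (cyc_succ Cj ^^ f) x = t_vert C1 Cj \<and> (\<forall>g\<le>f. (cyc_succ Cj ^^ g) x \<in> verts C1 \<inter> verts Cj)"
  proof
    fix x assume "x \<in> verts C1 \<inter> verts Cj"
    then obtain f where f: "f < length ps" "(cyc_succ Cj ^^ f) x = last ps" "\<forall>g\<le>f. (cyc_succ Cj ^^ g) x \<in> set ps"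
      using j.dipath_last[OF ps(2)] ps(3) by blast
    have "f < k" using f(1) ps(4) by linarith
    then show "\<exists>f<k. (cyc_succ Cj ^^ f) x = t_vert C1 Cj \<and> (\<forall>g\<le>f. (cyc_succ Cj ^^ g) x \<in> verts C1 \<inter> verts Cj)"
      using ps(3) f(2,3) t by metis
  qed
  show "\<forall>x\<in>verts C1 \<inter> verts Cj. \<exists>f<k. (cyc_succ C1 ^^ f) x = t_vert C1 Cj \<and> (\<forall>g\<le>f. (cyc_succ C1 ^^ g) x \<in> verts C1 \<inter> verts Cj)"
  proof
    fix x assume "x \<in> verts C1 \<inter> verts Cj"
    then obtain f where f: "f < length ps" "(cyc_succ C1 ^^ f) x = last ps" "\<forall>g\<le>f. (cyc_succ C1 ^^ g) x \<in> set ps"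
      using c.dipath_last[OF ps(1)] ps(3) by blast
    have "f < k" using f(1) ps(4) by linarith
    then show "\<exists>f<k. (cyc_succ C1 ^^ f) x = t_vert C1 Cj \<and> (\<forall>g\<le>f. (cyc_succ C1 ^^ g) x \<in> verts C1 \<inter> verts Cj)"
      using ps(3) f(2,3) t by metis
  qed
qed

end


context setting begin

lemma MAIN:
  assumes mj: "Cj \<in> meeting CC C1" and ml: "Cl \<in> meeting CC C1"
  and P: "\<forall>z \<in> verts Cj \<inter> verts Cl. \<exists>r<k. z = (cyc_succ Cj ^^ r) p0"
  and aj: "p0 = (cyc_succ Cj ^^ aj) (t_vert C1 Cj)" "1 \<le> aj" "aj \<le> 3*k"
  and al: "p0 = (cyc_succ Cl ^^ al) (t_vert C1 Cl)" "1 \<le> al" "al \<le> 3*k"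
  and nj: "t_vert C1 Cj \<notin> verts Cl"
  and y: "(cyc_succ C1 ^^ y) (t_vert C1 Cl) = t_vert C1 Cj" "4*k \<le> y" "y < card C1"
  shows "has_B_subdivision V E k 1 k"
proof -
  note mj' = meetD[OF mj] and ml' = meetD[OF ml]
  interpret c: dcyc C1 using cyc C1 by auto
  interpret j: dcyc Cj using cyc mj' by auto
  interpret l: dcyc Cl using cyc ml' by auto
  define tJ where "tJ = t_vert C1 Cj"
  define tL where "tL = t_vert C1 Cl"
  define s1 where "s1 = cyc_succ C1"
  define sj where "sj = cyc_succ Cj"
  define sl where "sl = cyc_succ Cl"
  note defs = tJ_def tL_def s1_def sj_def sl_def
  have tJ: "tJ \<in> verts C1" "tJ \<in> verts Cj" using meet(1)[OF mj] tJ_def by auto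
  have tL: "tL \<in> verts C1" "tL \<in> verts Cl" using meet(1)[OF ml] tL_def by auto
  have TJ: "\<forall>x\<in>verts C1 \<inter> verts Cj. \<exists>f<k. (sj ^^ f) x = tJ"
    using meet(2)[OF mj] defs by blast
  have T1L: "\<forall>x\<in>verts C1 \<inter> verts Cl. \<exists>f<k. (s1 ^^ f) x = tL \<and> (\<forall>g\<le>f. (s1 ^^ g) x \<in> verts C1 \<inter> verts Cl)"
    using meet(3)[OF ml] defs by blast
  have card1: "8 * k \<le> card C1" using cyc C1 by auto
  have cardj: "8 * k \<le> card Cj" using cyc mj' by auto
  have cardl: "8 * k \<le> card Cl" using cyc ml' by auto
  have P': "\<forall>z \<in> verts Cj \<inter> verts Cl. \<exists>r<k. z = (sj ^^ r) p0" using P defs by simp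
  have aj': "p0 = (sj ^^ aj) tJ" using aj defs by simp
  have al': "p0 = (sl ^^ al) tL" using al defs by simp
  have nj': "tJ \<notin> verts Cl" using nj defs by simp
  have y': "(s1 ^^ y) tL = tJ" using y defs by simp
  have p0j: "p0 \<in> verts Cj" using aj' j.iter_V tJ sj_def by simp
  have p0l: "p0 \<in> verts Cl" using al' l.iter_V tL sl_def by simp
  define S1 where "S1 = seg C1 tL y"
  define Sj where "Sj = seg Cj tJ aj"
  define P1 where "P1 = S1 @ tl Sj"
  define P2 where "P2 = seg Cl tL al"
  define P3 where "P3 = seg Cl p0 (card Cl - al)"
  have A: "z = tL" if z: "z \<in> set S1" "z \<in> verts Cl" for z
  proof -
    obtain i where i: "i \<le> y" "z = (s1 ^^ i) tL" using z(1) seg_simps(3)[of C1 tL y] S1_def s1_def by auto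
    have "z \<in> verts C1" using i c.iter_V tL s1_def by simp
    then obtain f where f: "f<k" "(s1 ^^ f) z = tL" "\<forall>g\<le>f. (s1 ^^ g) z \<in> verts C1 \<inter> verts Cl"
      using T1L z(2) by blast
    have e: "(s1 ^^ 0) tL = (s1 ^^ (f + i)) tL" using f(2) i by (simp add: funpow_add)
    have "f + i = 0 \<or> f + i = 0 + card C1"
      using c.KKc[OF tL(1) e[unfolded s1_def]] f i y by linarith
    then show "z = tL"
    proof
      assume "f + i = 0" then show ?thesis using i by simp
    next
      assume h: "f + i = 0 + card C1"
      then have "y - i \<le> f" using y by linarith
      then have "(s1 ^^ (y - i)) z \<in> verts Cl" using f(3) by blast
      moreover have "(s1 ^^ (y - i)) z = (s1 ^^ ((y - i) + i)) tL" by (simp only: i(2) funpow_add o_apply)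
      moreover have "(y - i) + i = y" using i by simp
      ultimately show ?thesis using nj' y' by simp
    qed
  qed
  have B: "z = p0" if z: "z \<in> set (tl Sj)" "z \<in> verts Cl" for z
  proof -
    obtain i where i: "1 \<le> i" "i \<le> aj" "z = (sj ^^ i) tJ" using z(1) set_tl_seg[of Cj tJ aj] Sj_def sj_def by auto
    have "z \<in> verts Cj" using i j.iter_V tJ sj_def by simp
    then obtain r where r: "r < k" "z = (sj ^^ r) p0" using P' z(2) by blast
    have e: "(sj ^^ i) tJ = (sj ^^ (r + aj)) tJ" using r i aj' by (simp add: funpow_add)
    show "z = p0"
    proof (cases "i \<le> r + aj")
      case True
      have "r + aj = i \<or> r + aj = i + card Cj"
        using j.KKc[OF tJ(2) e[unfolded sj_def] True] r aj cardj by linarith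
      then have "r + aj = i" using r aj cardj i by linarith
      then have "r = 0" using i by linarith
      then show ?thesis using r by simp
    next
      case False then show ?thesis using i by linarith
    qed
  qed
  have lS1: "last S1 = tJ" using seg_simps(2)[of C1 tL y] S1_def y' s1_def by simp
  have hSj: "hd Sj = tJ" using seg_simps(1)[of Cj tJ aj] Sj_def by simp
  have neS: "S1 \<noteq> []" "Sj \<noteq> []" using seg_simps(4)[of C1 tL y] seg_simps(4)[of Cj tJ aj] S1_def Sj_def by auto
  have C: "set S1 \<inter> set Sj = {tJ}"
  proof
    show "{tJ} \<subseteq> set S1 \<inter> set Sj" using last_in_set[OF neS(1)] hd_in_set[OF neS(2)] lS1 hSj by simp
    show "set S1 \<inter> set Sj \<subseteq> {tJ}"
    proof
      fix z assume z: "z \<in> set S1 \<inter> set Sj"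
      then obtain i where i: "i \<le> aj" "z = (sj ^^ i) tJ" using seg_simps(3)[of Cj tJ aj] Sj_def sj_def by auto
      have "z \<in> verts C1" using z seg_simps(3)[of C1 tL y] S1_def c.iter_V tL by auto
      moreover have "z \<in> verts Cj" using i j.iter_V tJ sj_def by simp
      ultimately obtain f where f: "f < k" "(sj ^^ f) z = tJ" using TJ by blast
      have e: "(sj ^^ 0) tJ = (sj ^^ (f + i)) tJ" using f i by (simp add: funpow_add)
      have "f + i = 0 \<or> f + i = 0 + card Cj"
        using j.KKc[OF tJ(2) e[unfolded sj_def]] f i aj cardj by linarith
      then have "i = 0" using f i aj cardj by linarith
      then show "z \<in> {tJ}" using i by simp
    qed
  qed
  have b1: "aj < card Cj" "al < card Cl" "card Cl - al < card Cl" using aj al cardj cardl by linarith+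
  have dS1: "is_dipath E S1" using dipath_mono[OF c.seg_dipathc[OF tL(1) y(3)] cyc(2)[OF C1]] S1_def by simp
  have dSj: "is_dipath E Sj" using dipath_mono[OF j.seg_dipathc[OF tJ(2) b1(1)] cyc(2)[OF mj'(1)]] Sj_def by simp
  have dP2: "is_dipath E P2" using dipath_mono[OF l.seg_dipathc[OF tL(2) b1(2)] cyc(2)[OF ml'(1)]] P2_def by simp
  have dP3: "is_dipath E P3" using dipath_mono[OF l.seg_dipathc[OF p0l b1(3)] cyc(2)[OF ml'(1)]] P3_def by simp
  have dP1: "is_dipath E P1" unfolding P1_def
    using dipath_append[OF dS1 dSj] lS1 hSj C by simp
  have setP1: "set P1 = set S1 \<union> set (tl Sj)" unfolding P1_def by simp
  have P1Vl: "set P1 \<inter> verts Cl \<subseteq> {tL, p0}" using A B setP1 by blast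
  have P2Vl: "set P2 \<subseteq> verts Cl" using seg_simps(3)[of Cl tL al] P2_def l.iter_V tL by auto
  have P3Vl: "set P3 \<subseteq> verts Cl" using seg_simps(3)[of Cl p0] P3_def l.iter_V p0l by auto
  have lenSj: "length Sj = Suc aj" using seg_simps(4)[of Cj tJ aj] Sj_def by simp
  obtain x0 rest where Sjc0: "Sj = x0 # rest" using neS(2) by (cases Sj) auto
  have Sjc: "Sj = x0 # rest" "rest \<noteq> []" using lenSj aj Sjc0 by auto
  have hP1: "hd P1 = tL" unfolding P1_def using neS(1) seg_simps(1)[of C1 tL y] S1_def by simp
  have lP1: "last P1 = p0" using Sjc P1_def seg_simps(2)[of Cj tJ aj] Sj_def aj' sj_def by simp
  have hP2: "hd P2 = tL" "last P2 = p0" using seg_simps(1,2)[of Cl tL al] P2_def al' sl_def by auto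
  have hP3: "hd P3 = p0" using seg_simps(1)[of Cl p0 "card Cl - al"] P3_def by auto
  have "last P3 = (sl ^^ (card Cl - al)) ((sl ^^ al) tL)" using seg_simps(2)[of Cl p0 "card Cl - al"] P3_def al' sl_def by simp
  also have "\<dots> = (sl ^^ (card Cl - al + al)) tL" by (simp add: funpow_add)
  also have "\<dots> = tL" using l.fullc[OF tL(2)] al cardl sl_def by simp
  finally have lP3: "last P3 = tL" .
  have len1: "length P1 = Suc y + aj" unfolding P1_def S1_def using lenSj seg_simps(4)[of C1 tL y] by simp
  have len2: "length P2 = Suc al" unfolding P2_def using seg_simps(4)[of Cl tL al] by simp
  have len3: "length P3 = Suc (card Cl - al)" unfolding P3_def using seg_simps(4)[of Cl p0 "card Cl - al"] by simp
  have ne: "P1 \<noteq> []" "P2 \<noteq> []" "P3 \<noteq> []" using len1 len2 len3 by auto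
  have mem: "tL \<in> set P1" "p0 \<in> set P1" "tL \<in> set P2" "p0 \<in> set P2" "tL \<in> set P3" "p0 \<in> set P3"
    using hd_in_set[OF ne(1)] last_in_set[OF ne(1)] hd_in_set[OF ne(2)] last_in_set[OF ne(2)]
      hd_in_set[OF ne(3)] last_in_set[OF ne(3)] hP1 lP1 hP2 hP3 lP3 by simp_all
  have I12: "set P1 \<inter> set P2 = {tL, p0}" using P1Vl P2Vl mem by blast
  have I13: "set P1 \<inter> set P3 = {tL, p0}" using P1Vl P3Vl mem by blast
  have I23: "set P2 \<inter> set P3 \<subseteq> {tL, p0}"
  proof
    fix z assume z: "z \<in> set P2 \<inter> set P3"
    obtain i where i: "i \<le> al" "z = (sl ^^ i) tL" using z seg_simps(3)[of Cl tL al] P2_def sl_def by auto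
    obtain i' where i': "i' \<le> card Cl - al" "z = (sl ^^ i') p0" using z seg_simps(3)[of Cl p0 "card Cl - al"] P3_def sl_def by auto
    have e: "(sl ^^ i) tL = (sl ^^ (i' + al)) tL" using i i' al' by (simp add: funpow_add)
    show "z \<in> {tL, p0}"
    proof (cases "i \<le> i' + al")
      case True
      have "i' + al = i \<or> i' + al = i + card Cl"
        using l.KKc[OF tL(2) e[unfolded sl_def] True] i' al cardl by linarith
      then show ?thesis
      proof
        assume "i' + al = i" then have "i' = 0" using i by linarith
        then show ?thesis using i' by simp
      next
        assume "i' + al = i + card Cl" then have "i = 0" using i' al cardl by linarith
        then show ?thesis using i by simp
      qed
    next
      case False then show ?thesis using i by linarith
    qed
  qed
  have I23': "set P2 \<inter> set P3 = {tL, p0}" using I23 mem by blast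
  have uw: "tL \<noteq> p0" using l.nofixc[OF tL(2), of al] al' al cardl sl_def by auto
  have P12: "P1 \<noteq> P2"
  proof
    assume "P1 = P2"
    then have "set P1 = {tL, p0}" using I12 by blast
    moreover have "card (set P1) = length P1" using dP1 by (simp add: is_dipath_def distinct_card)
    moreover have "card {tL, p0} \<le> 2" by (simp add: card_insert_if)
    ultimately have "length P1 \<le> 2" by simp
    then show False using len1 y k1 by linarith
  qed
  have inV: "tL \<in> V" "p0 \<in> V" using vertsV[OF ml'(1)] tL p0l by auto
  have L1: "length P1 - 1 \<ge> k" using len1 y by linarith
  have L2: "length P2 - 1 \<ge> 1" using len2 al by linarith
  have L3: "length P3 - 1 \<ge> k" using len3 al cardl by linarith
  show ?thesis unfolding has_B_subdivision_def
    by (rule exI[of _ tL], rule exI[of _ p0], rule exI[of _ P1], rule exI[of _ P2], rule exI[of _ P3],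
      intro conjI inV uw dP1 dP2 dP3 P12 hP1 lP1 hP2 hP3 lP3 L1 L2 L3 I12 I13 I23')
qed

end


context setting begin

lemma CONS:
  assumes mj: "Cj \<in> meeting CC C1" and ml: "Cl \<in> meeting CC C1" and ne: "Cj \<noteq> Cl"
  and notB: "\<not> has_B_subdivision V E k 1 k"
  and v: "(cyc_succ Cj ^^ dj) (t_vert C1 Cj) = (cyc_succ Cl ^^ dl) (t_vert C1 Cl)"
  and d: "1 \<le> dj" "dj < dl" "dl \<le> 3 * k"
  shows False
proof -
  note mj' = meetD[OF mj] and ml' = meetD[OF ml]
  interpret c: dcyc C1 using cyc C1 by auto
  interpret j: dcyc Cj using cyc mj' by auto
  interpret l: dcyc Cl using cyc ml' by auto
  define tJ where "tJ = t_vert C1 Cj"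
  define tL where "tL = t_vert C1 Cl"
  define s1 where "s1 = cyc_succ C1"
  define sj where "sj = cyc_succ Cj"
  define sl where "sl = cyc_succ Cl"
  note defs = tJ_def tL_def s1_def sj_def sl_def
  have tJ: "tJ \<in> verts C1" "tJ \<in> verts Cj" using meet(1)[OF mj] tJ_def by auto
  have tL: "tL \<in> verts C1" "tL \<in> verts Cl" using meet(1)[OF ml] tL_def by auto
  have TL: "\<forall>x\<in>verts C1 \<inter> verts Cl. \<exists>f<k. (sl ^^ f) x = tL"
    using meet(2)[OF ml] defs by blast
  have card1: "8 * k \<le> card C1" using cyc C1 by auto
  have cardj: "8 * k \<le> card Cj" using cyc mj' by auto
  have cardl: "8 * k \<le> card Cl" using cyc ml' by auto
  define v where "v = (sj ^^ dj) tJ"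
  have vl: "v = (sl ^^ dl) tL" using v v_def defs by simp
  have vVj: "v \<in> verts Cj" using v_def j.iter_V tJ sj_def by simp
  have vVl: "v \<in> verts Cl" using vl l.iter_V tL sl_def by simp
  obtain p0 m where pm: "m \<le> k" "\<forall>z. z \<in> verts Cj \<inter> verts Cl \<longleftrightarrow> (\<exists>r<m. z = (sj ^^ r) p0)"
    "\<forall>r<m. (sj ^^ r) p0 = (sl ^^ r) p0"
    using pair[OF mj'(1) ml'(1) ne] vVj vVl sj_def sl_def by blast
  obtain e where e: "e < m" "v = (sj ^^ e) p0" using pm(2) vVj vVl by blast
  have el: "v = (sl ^^ e) p0" using e pm(3) by simp
  have "\<exists>r<m. p0 = (sj ^^ r) p0" using e(1) by (intro exI[of _ 0]) simp
  then have p0: "p0 \<in> verts Cj" "p0 \<in> verts Cl" using pm(2) by blast+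
  consider "dl \<le> e" | "dj \<le> e" "e < dl" | "e < dj" by linarith
  then show False
  proof cases
    case 1
    define rJ where "rJ = e - dj"
    define rL where "rL = e - dl"
    have "(sj ^^ dj) ((sj ^^ rJ) p0) = (sj ^^ (dj + rJ)) p0" by (simp only: funpow_add o_apply)
    also have "dj + rJ = e" using 1 d rJ_def by simp
    finally have eqtJp: "(sj ^^ dj) tJ = (sj ^^ dj) (( sj ^^ rJ) p0)" using e v_def by simp
    have tJp: "tJ = (sj ^^ rJ) p0" using j.iter_inj[OF tJ(2) j.iter_V[OF p0(1), of rJ] eqtJp[unfolded sj_def]] sj_def by simp
    have "(sl ^^ dl) ((sl ^^ rL) p0) = (sl ^^ (dl + rL)) p0" by (simp only: funpow_add o_apply)
    also have "dl + rL = e" using 1 d rL_def by simp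
    finally have eqtLp: "(sl ^^ dl) tL = (sl ^^ dl) (( sl ^^ rL) p0)" using el vl by simp
    have tLp: "tL = (sl ^^ rL) p0" using l.iter_inj[OF tL(2) l.iter_V[OF p0(2), of rL] eqtLp[unfolded sl_def]] sl_def by simp
    have rJm: "rJ < m" using rJ_def e by simp
    have tJl: "tJ = (sl ^^ rJ) p0" using tJp pm(3) rJm by simp
    have tJVl: "tJ \<in> verts Cl" using tJl l.iter_V[OF p0(2)] sl_def by simp
    obtain f where f: "f < k" "(sl ^^ f) tJ = tL" using TL tJ(1) tJVl by blast
    have "(rJ - rL) + rL = rJ" using rJ_def rL_def d 1 by simp
    then have "tJ = (sl ^^ ((rJ - rL) + rL)) p0" using tJl by simp
    then have "tJ = (sl ^^ (rJ - rL)) tL" using tLp by (simp only: funpow_add o_apply)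
    then have "(sl ^^ (f + (rJ - rL))) tL = tL" using f by (simp add: funpow_add)
    moreover have "0 < f + (rJ - rL)" "f + (rJ - rL) < card Cl" using 1 rJ_def rL_def d f rJm pm(1) cardl by linarith+
    ultimately show False using l.nofixc[OF tL(2)] by (simp add: sl_def)
  next
    case 2
    define rJ where "rJ = e - dj"
    have "(sj ^^ dj) ((sj ^^ rJ) p0) = (sj ^^ (dj + rJ)) p0" by (simp only: funpow_add o_apply)
    also have "dj + rJ = e" using 2 d rJ_def by simp
    finally have eqtJp: "(sj ^^ dj) tJ = (sj ^^ dj) (( sj ^^ rJ) p0)" using e v_def by simp
    have tJp: "tJ = (sj ^^ rJ) p0" using j.iter_inj[OF tJ(2) j.iter_V[OF p0(1), of rJ] eqtJp[unfolded sj_def]] sj_def by simp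
    have rJm: "rJ < m" using rJ_def e by simp
    have tJl: "tJ = (sl ^^ rJ) p0" using tJp pm(3) rJm by simp
    have tJVl: "tJ \<in> verts Cl" using tJl l.iter_V[OF p0(2)] sl_def by simp
    have "(sl ^^ e) ((sl ^^ (dl - e)) tL) = (sl ^^ (e + (dl - e))) tL" by (simp only: funpow_add o_apply)
    also have "e + (dl - e) = dl" using 2 by simp
    finally have eqp0l: "(sl ^^ e) p0 = (sl ^^ e) ((sl ^^ (dl - e)) tL)" using el vl by simp
    have p0l: "p0 = (sl ^^ (dl - e)) tL" using l.iter_inj[OF p0(2) l.iter_V[OF tL(2), of "dl - e"] eqp0l[unfolded sl_def]] sl_def by simp
    obtain f where f: "f < k" "(sl ^^ f) tJ = tL" using TL tJ(1) tJVl by blast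
    have "tJ = (sl ^^ (rJ + (dl - e))) tL" using tJl p0l by (simp add: funpow_add)
    then have "(sl ^^ (f + (rJ + (dl - e)))) tL = tL" using f by (simp add: funpow_add)
    moreover have "0 < f + (rJ + (dl - e))" "f + (rJ + (dl - e)) < card Cl"
      using 2 rJ_def d f rJm pm(1) cardl by linarith+
    ultimately show False using l.nofixc[OF tL(2)] by (simp add: sl_def)
  next
    case 3
    define aj where "aj = dj - e"
    define al where "al = dl - e"
    have "(sj ^^ e) ((sj ^^ aj) tJ) = (sj ^^ (e + aj)) tJ" by (simp only: funpow_add o_apply)
    also have "e + aj = dj" using 3 aj_def by simp
    finally have eqp0j: "(sj ^^ e) p0 = (sj ^^ e) (( sj ^^ aj) tJ)" using e v_def by simp
    have p0j: "p0 = (sj ^^ aj) tJ" using j.iter_inj[OF p0(1) j.iter_V[OF tJ(2), of aj] eqp0j[unfolded sj_def]] sj_def by simp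
    have "(sl ^^ e) ((sl ^^ al) tL) = (sl ^^ (e + al)) tL" by (simp only: funpow_add o_apply)
    also have "e + al = dl" using 3 d al_def by simp
    finally have eqp0l: "(sl ^^ e) p0 = (sl ^^ e) (( sl ^^ al) tL)" using el vl by simp
    have p0l: "p0 = (sl ^^ al) tL" using l.iter_inj[OF p0(2) l.iter_V[OF tL(2), of al] eqp0l[unfolded sl_def]] sl_def by simp
    have ab: "1 \<le> aj" "aj \<le> 3 * k" "1 \<le> al" "al \<le> 3 * k" using 3 d aj_def al_def by linarith+
    have nj: "tJ \<notin> verts Cl"
    proof
      assume "tJ \<in> verts Cl"
      then obtain r where r: "r < m" "tJ = (sj ^^ r) p0" using pm(2) tJ by blast
      then have "(sj ^^ (r + aj)) tJ = tJ" using p0j by (simp add: funpow_add)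
      moreover have "0 < r + aj" "r + aj < card Cj" using ab r pm(1) cardj by linarith+
      ultimately show False using j.nofixc[OF tJ(2)] by (simp add: sj_def)
    qed
    have nl: "tL \<notin> verts Cj"
    proof
      assume "tL \<in> verts Cj"
      then obtain r where r: "r < m" "tL = (sj ^^ r) p0" using pm(2) tL by blast
      then have r': "tL = (sl ^^ r) p0" using pm(3) by simp
      then have "(sl ^^ (r + al)) tL = tL" using p0l by (simp add: funpow_add)
      moreover have "0 < r + al" "r + al < card Cl" using ab r pm(1) cardl by linarith+
      ultimately show False using l.nofixc[OF tL(2)] by (simp add: sl_def)
    qed
    have Pj: "\<forall>z \<in> verts Cj \<inter> verts Cl. \<exists>r<k. z = (sj ^^ r) p0"
    proof
      fix z assume "z \<in> verts Cj \<inter> verts Cl"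
      then obtain r where "r < m" "z = (sj ^^ r) p0" using pm(2) by blast
      then show "\<exists>r<k. z = (sj ^^ r) p0" using pm(1) by (intro exI[of _ r]) simp
    qed
    have Pl: "\<forall>z \<in> verts Cl \<inter> verts Cj. \<exists>r<k. z = (sl ^^ r) p0"
    proof
      fix z assume "z \<in> verts Cl \<inter> verts Cj"
      then obtain r where "r < m" "z = (sj ^^ r) p0" using pm(2) by blast
      then show "\<exists>r<k. z = (sl ^^ r) p0" using pm(1) pm(3) by (intro exI[of _ r]) simp
    qed
    have "tJ \<noteq> tL" using nj tL by blast
    obtain y where y: "y < card C1" "(s1 ^^ y) tL = tJ" using c.reachc[OF tL(1) tJ(1)] s1_def by blast
    have y0: "y \<noteq> 0"
    proof
      assume "y = 0" then show False using y \<open>tJ \<noteq> tL\<close> by simp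
    qed
    show False
    proof (cases "4 * k \<le> y")
      case True
      have "has_B_subdivision V E k 1 k"
        using MAIN[OF mj ml Pj[unfolded sj_def] p0j[unfolded sj_def tJ_def] ab(1,2) p0l[unfolded sl_def tL_def] ab(3,4)
          nj[unfolded tJ_def] y(2)[unfolded s1_def tL_def tJ_def] True y(1)] .
      then show False using notB by blast
    next
      case False
      define y' where "y' = card C1 - y"
      have "(s1 ^^ y') tJ = (s1 ^^ (y' + y)) tL" using y by (simp add: funpow_add)
      also have "y' + y = card C1" using y y'_def by simp
      finally have y'e: "(s1 ^^ y') tJ = tL" using c.fullc[OF tL(1)] s1_def by simp
      have y'b: "4 * k \<le> y'" "y' < card C1" using False y y0 card1 y'_def by linarith+
      have "has_B_subdivision V E k 1 k"
        using MAIN[OF ml mj Pl[unfolded sl_def] p0l[unfolded sl_def tL_def] ab(3,4) p0j[unfolded sj_def tJ_def] ab(1,2)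
          nl[unfolded tL_def] y'e[unfolded s1_def tL_def tJ_def] y'b] .
      then show False using notB by blast
    qed
  qed
qed

end


definition dep :: "nat \<Rightarrow> ('a \<times> 'a) set set \<Rightarrow> ('a \<times> 'a) set \<Rightarrow> 'a \<Rightarrow> nat" where
  "dep k CC C1 x = (SOME d. \<exists>Cj\<in>meeting CC C1. 1 \<le> d \<and> d \<le> 3 * k \<and> x = (cyc_succ Cj ^^ d) (t_vert C1 Cj))"

context setting begin

lemma dep_eq:
  assumes notB: "\<not> has_B_subdivision V E k 1 k"
  and mj: "Cj \<in> meeting CC C1" and d: "1 \<le> d" "d \<le> 3 * k" and x: "x = (cyc_succ Cj ^^ d) (t_vert C1 Cj)"
  shows "dep k CC C1 x = d"
proof -
  have "\<exists>d. \<exists>Cj\<in>meeting CC C1. 1 \<le> d \<and> d \<le> 3 * k \<and> x = (cyc_succ Cj ^^ d) (t_vert C1 Cj)"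
    using mj d x by blast
  from someI_ex[OF this] obtain Cl where
    ml: "Cl \<in> meeting CC C1" and d': "1 \<le> dep k CC C1 x" "dep k CC C1 x \<le> 3 * k"
    and x': "x = (cyc_succ Cl ^^ dep k CC C1 x) (t_vert C1 Cl)"
    unfolding dep_def by blast
  define d' where "d' = dep k CC C1 x"
  have "d' = d"
  proof (cases "Cj = Cl")
    case True
    interpret j: dcyc Cj using cyc meetD[OF mj] by auto
    have tJ: "t_vert C1 Cj \<in> verts Cj" using meet(1)[OF mj] by auto
    have e: "(cyc_succ Cj ^^ d) (t_vert C1 Cj) = (cyc_succ Cj ^^ d') (t_vert C1 Cj)"
      using x x' True d'_def by simp
    have cj: "8 * k \<le> card Cj" using cyc meetD[OF mj] by auto
    show ?thesis
    proof (cases "d \<le> d'")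
      case True
      then show ?thesis using j.KKc[OF tJ e True] d' d cj d'_def by linarith
    next
      case False
      then show ?thesis using j.KKc[OF tJ e[symmetric]] d' d cj d'_def by linarith
    qed
  next
    case False
    have v: "(cyc_succ Cj ^^ d) (t_vert C1 Cj) = (cyc_succ Cl ^^ d') (t_vert C1 Cl)"
      using x x' d'_def by simp
    consider "d < d'" | "d' < d" | "d = d'" by linarith
    then show ?thesis
    proof cases
      case 1 then show ?thesis using CONS[OF mj ml False notB v d(1) 1] d' d'_def by simp
    next
      case 2 then show ?thesis using CONS[OF ml mj _ notB v[symmetric] _ 2 d(2)] d' d'_def False by simp
    qed simp
  qed
  then show ?thesis using d'_def by simp
qed

lemma snd_Iplus: "snd (Iplus k CC C1) = (\<Union>Cj\<in>meeting CC C1.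
   {((cyc_succ Cj ^^ i) (t_vert C1 Cj), (cyc_succ Cj ^^ Suc i) (t_vert C1 Cj)) | i. 1 \<le> i \<and> i < 3 * k})"
  unfolding Iplus_def Qplus_def Let_def by simp

lemma acyclic:
  assumes notB: "\<not> has_B_subdivision V E k 1 k"
  shows "\<not> has_dicycle (Iplus k CC C1)"
proof
  assume "has_dicycle (Iplus k CC C1)"
  then obtain A where A: "A \<subseteq> snd (Iplus k CC C1)" "is_dicycle A" unfolding has_dicycle_def by blast
  then obtain ws where ws: "2 \<le> length ws" "A = {(ws ! i, ws ! (Suc i mod length ws)) | i. i < length ws}"
    unfolding is_dicycle_def by blast
  define N where "N = length ws"
  define D where "D = dep k CC C1"
  have step: "D (ws ! (Suc i mod N)) = Suc (D (ws ! i))" if i: "i < N" for i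
  proof -
    have "(ws ! i, ws ! (Suc i mod N)) \<in> A" using ws(2) i N_def by blast
    then have "(ws ! i, ws ! (Suc i mod N)) \<in> snd (Iplus k CC C1)" using A(1) by blast
    then obtain Cj d where Cj: "Cj \<in> meeting CC C1" "1 \<le> d" "d < 3 * k"
      "ws ! i = (cyc_succ Cj ^^ d) (t_vert C1 Cj)" "ws ! (Suc i mod N) = (cyc_succ Cj ^^ Suc d) (t_vert C1 Cj)"
      unfolding snd_Iplus by blast
    have "D (ws ! i) = d" using dep_eq[OF notB Cj(1)] Cj D_def by simp
    moreover have "D (ws ! (Suc i mod N)) = Suc d" using dep_eq[OF notB Cj(1), of "Suc d"] Cj D_def by simp
    ultimately show ?thesis by simp
  qed
  have ind: "i < N \<Longrightarrow> D (ws ! i) = D (ws ! 0) + i" for i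
  proof (induction i)
    case 0 then show ?case by simp
  next
    case (Suc i)
    then have "Suc i mod N = Suc i" by simp
    then show ?case using step[of i] Suc by simp
  qed
  have N2: "2 \<le> N" using ws N_def by simp
  have "Suc (N - 1) mod N = 0" using N2 by simp
  then have "D (ws ! 0) = Suc (D (ws ! (N - 1)))" using step[of "N - 1"] N2 by simp
  also have "\<dots> = Suc (D (ws ! 0) + (N - 1))" using ind[of "N - 1"] N2 by simp
  finally show False by simp
qed

end

theorem mainTheorem14:
  fixes V :: "'a set" and E :: "('a \<times> 'a) set" and k :: nat
    and \<C> :: "('a \<times> 'a) set set" and C1 :: "('a \<times> 'a) set"
  assumes "k \<ge> 1"
    and "digraph V E"
    and "\<not> has_B_subdivision V E k 1 k"
    and "k_suitable E k \<C>"
    and "C1 \<in> \<C>"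
  shows "\<not> has_dicycle (Iplus k \<C> C1)"
proof -
  interpret setting V E k \<C> C1 using assms by unfold_locales
  show ?thesis using acyclic assms(3) by blast
qed


end
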